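(* Let $\ell\ge2$ and $k\ge0$ be integers, and let $\lambda$ be an $\ell$-core with $\lambda_1=k$. Write $\mathbf{a}=(a_1,\ldots,a_\ell)=\pi_\ell^{-1}(\lambda)$ and let $(k\bmod\ell)$ denote the unique integer in $\{1,\ldots,\ell\}$ congruent to $k$ modulo $\ell$. Then \[ a_{(k\bmod\ell)}=\left\lceil \frac{k}{\ell}\right\rceil, \] i.e. $\pi_\ell^{-1}(\lambda)$ lies in the affine hyperplane $H_\ell^k=\{\mathbf{a}\in\mathbf{R}^\ell:\sum_j a_j=0,\ a_{(k\bmod\ell)}=\lceil k/\ell\rceil\}$.
   Context: A partition is an $\ell$-core if none of its hook lengths is divisible by $\ell$ (the hook length of a box is the number of boxes weakly to its right in its row plus the number strictly below it in its column). For $\mathbf{a}\in\mathbf{Z}^\ell$ with $\sum a_j=0$, let $X(\mathbf{a})=\{r\ell+(j-1):1\le j\le\ell,\ r\in\mathbf{Z},\ r\le a_j\}$ and let $\pi_\ell(\mathbf{a})$ be the partition whose nonzero parts are the positive values of $\#\{y\in\mathbf{Z}\setminus X(\mathbf{a}):y<x\}$, $x\in X(\mathbf{a})$. It is known that $\pi_\ell$ is a bijection from $\{\mathbf{a}\in\mathbf{Z}^\ell:\sum a_j=0\}$ onto the set of $\ell$-cores. $\lambda_1$ is the largest part ($0$ for the empty partition). *)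

theory Defs
  imports Complex_Main "HOL-Library.Multiset"
begin

definition is_partition :: "nat list \<Rightarrow> bool" where
  "is_partition lam \<longleftrightarrow> sorted_wrt (\<ge>) lam \<and> 0 \<notin> set lam"

definition largest_part :: "nat list \<Rightarrow> nat" where
  "largest_part lam = (if lam = [] then 0 else hd lam)"

definition col_len :: "nat list \<Rightarrow> nat \<Rightarrow> nat" where
  "col_len lam j = length (filter (\<lambda>p. j < p) lam)"

text \<open>Hook length of the box in row i, column j (both 0-indexed, j < lam!i):
  boxes weakly right in the row plus boxes strictly below in the column.\<close>
definition hook :: "nat list \<Rightarrow> nat \<Rightarrow> nat \<Rightarrow> nat" where
  "hook lam i j = (lam ! i - j) + (col_len lam j - Suc i)"

definition is_core :: "nat \<Rightarrow> nat list \<Rightarrow> bool" where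
  "is_core l lam \<longleftrightarrow> is_partition lam \<and>
     (\<forall>i < length lam. \<forall>j < lam ! i. \<not> l dvd hook lam i j)"

text \<open>Vectors a in Z^l are functions indexed by 1..l.\<close>
definition Xset :: "nat \<Rightarrow> (nat \<Rightarrow> int) \<Rightarrow> int set" where
  "Xset l a = {r * int l + (int j - 1) | j r. 1 \<le> j \<and> j \<le> l \<and> r \<le> a j}"

definition gap_count :: "nat \<Rightarrow> (nat \<Rightarrow> int) \<Rightarrow> int \<Rightarrow> nat" where
  "gap_count l a x = card {y. y \<notin> Xset l a \<and> y < x}"

definition pi_ell :: "nat \<Rightarrow> (nat \<Rightarrow> int) \<Rightarrow> nat list" where
  "pi_ell l a = rev (sorted_list_of_multiset
     (image_mset (gap_count l a) (mset_set {x \<in> Xset l a. 0 < gap_count l a x})))"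

definition mod1 :: "nat \<Rightarrow> nat \<Rightarrow> nat" where
  "mod1 k l = (if k mod l = 0 then l else k mod l)"

end

theory Submission
  imports Defs
begin

lemma sorted_le_last: "sorted ys \<Longrightarrow> z \<in> set ys \<Longrightarrow> z \<le> last ys"
  by (induction ys) (auto simp: last_in_set)

lemma X_char:
  assumes "l > 0"
  shows "x \<in> Xset l a \<longleftrightarrow> x div int l \<le> a (nat (x mod int l) + 1)"
proof
  assume "x \<in> Xset l a"
  then obtain j r where j: "1 \<le> j" "j \<le> l" "r \<le> a j" "x = r * int l + (int j - 1)"
    unfolding Xset_def by auto
  have "x div int l = r" using j assms by simp
  moreover have "x mod int l = int j - 1" using j assms by simp
  ultimately show "x div int l \<le> a (nat (x mod int l) + 1)" using j
    by (simp add: nat_diff_distrib')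
next
  assume h: "x div int l \<le> a (nat (x mod int l) + 1)"
  have "x = x div int l * int l + (int (nat (x mod int l) + 1) - 1)"
    using assms by simp
  moreover have "nat (x mod int l) + 1 \<le> l"
  proof -
    have "x mod int l < int l" using assms by simp
    hence "nat (x mod int l) < l" using assms by (simp add: nat_less_iff)
    thus ?thesis by simp
  qed
  ultimately show "x \<in> Xset l a" unfolding Xset_def using h
    by (intro CollectI exI[of _ "nat (x mod int l) + 1"] exI[of _ "x div int l"]) auto
qed

theorem mainTheorem8:
  fixes l k :: nat and lam :: "nat list" and a :: "nat \<Rightarrow> int"
  assumes "l \<ge> 2"
    and "is_core l lam"
    and "largest_part lam = k"
    and "(\<Sum>j = 1..l. a j) = 0"
    and "pi_ell l a = lam"
  shows "a (mod1 k l) = \<lceil>real k / real l\<rceil>"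
proof -
  have l0: "l > 0" using assms(1) by simp
  define X where "X = Xset l a"
  define f where "f = (\<lambda>j::nat. a j * int l + int j - 1)"
  define M where "M = Max (f ` {1..l})"
  define s where "s = Min (a ` {1..l})"
  have ne: "{1..l} \<noteq> {}" using l0 by simp
  obtain j0 where j0: "j0 \<in> {1..l}" "M = f j0"
  proof -
    have "M \<in> f ` {1..l}" unfolding M_def by (rule Max_in) (use ne in auto)
    then show ?thesis using that by auto
  qed
  have fle: "j \<in> {1..l} \<Longrightarrow> f j \<le> M" for j unfolding M_def by simp
  have sle: "j \<in> {1..l} \<Longrightarrow> s \<le> a j" for j unfolding s_def by simp
  have MX: "M \<in> X" unfolding X_def Xset_def using j0 by (auto simp: f_def)
  have Xle: "x \<in> X \<Longrightarrow> x \<le> M" for x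
  proof -
    assume "x \<in> X"
    then obtain j r where j: "1 \<le> j" "j \<le> l" "r \<le> a j" "x = r * int l + (int j - 1)"
      unfolding X_def Xset_def by auto
    have "r * int l \<le> a j * int l" using j by (intro mult_right_mono) simp_all
    hence "x \<le> f j" using j unfolding f_def by linarith
    thus ?thesis using fle j by force
  qed
  have below: "y < s * int l \<Longrightarrow> y \<in> X" for y
  proof -
    assume "y < s * int l"
    moreover have "y div int l * int l + y mod int l = y" by (rule div_mult_mod_eq)
    moreover have "y mod int l \<ge> 0" using l0 by simp
    ultimately have "(y div int l) * int l < s * int l" by linarith
    hence "y div int l < s" using l0 by (simp add: mult_less_cancel_right)
    moreover have "nat (y mod int l) + 1 \<in> {1..l}"
    proof -
      have "y mod int l < int l" using l0 by simp
      hence "nat (y mod int l) < l" using l0 by (simp add: nat_less_iff)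
      thus ?thesis by simp
    qed
    ultimately show ?thesis unfolding X_def using X_char[OF l0] sle by force
  qed
  define g where "g = (\<lambda>x. card {y. y \<notin> X \<and> y < x})"
  have gapsub: "x \<le> M \<Longrightarrow> {y. y \<notin> X \<and> y < x} \<subseteq> {s * int l..<M}" for x
    using below by force
  have gmono: "x \<le> M \<Longrightarrow> g x \<le> g M" for x
    unfolding g_def by (rule card_mono) (use gapsub[of M] in \<open>auto intro: finite_subset\<close>)
  define h where "h = (\<lambda>j r. r * int l + (int j - 1))"
  have Xwin: "X \<inter> {s * int l..M} = (\<Union>j\<in>{1..l}. h j ` {s..a j})"
  proof (intro equalityI subsetI)
    fix x assume "x \<in> X \<inter> {s * int l..M}"
    then obtain j r where j: "1 \<le> j" "j \<le> l" "r \<le> a j" "x = r * int l + (int j - 1)"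
      and xs: "s * int l \<le> x" unfolding X_def Xset_def by auto
    have "r \<ge> s"
    proof (rule ccontr)
      assume "\<not> r \<ge> s"
      hence "r + 1 \<le> s" by simp
      hence "(r + 1) * int l \<le> s * int l" using l0 by (simp add: mult_right_mono)
      thus False using xs j by (simp add: algebra_simps)
    qed
    hence "r \<in> {s..a j}" using j by simp
    hence "x \<in> h j ` {s..a j}" using j unfolding h_def by (intro image_eqI[of _ _ r]) simp_all
    thus "x \<in> (\<Union>j\<in>{1..l}. h j ` {s..a j})" using j by auto
  next
    fix x assume "x \<in> (\<Union>j\<in>{1..l}. h j ` {s..a j})"
    then obtain j r where j: "j \<in> {1..l}" "s \<le> r" "r \<le> a j" "x = h j r" by auto
    have xX: "x \<in> X" unfolding X_def Xset_def h_def using j by (auto simp: h_def)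
    have "s * int l \<le> r * int l" using j by (simp add: mult_right_mono)
    moreover have "int j \<ge> 1" using j by simp
    ultimately have "s * int l \<le> x" using j unfolding h_def by linarith
    thus "x \<in> X \<inter> {s * int l..M}" using xX Xle by auto
  qed
  have cardwin: "int (card (X \<inter> {s * int l..M})) = int l * (1 - s)"
  proof -
    have disj: "\<forall>i\<in>{1..l}. \<forall>j\<in>{1..l}. i \<noteq> j \<longrightarrow> h i ` {s..a i} \<inter> h j ` {s..a j} = {}"
    proof (intro ballI impI)
      fix i j assume ij: "i \<in> {1..l}" "j \<in> {1..l}" "i \<noteq> j"
      show "h i ` {s..a i} \<inter> h j ` {s..a j} = {}"
      proof (rule ccontr)
        assume "h i ` {s..a i} \<inter> h j ` {s..a j} \<noteq> {}"
        then obtain r r' where "h i r = h j r'" by auto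
        hence "(h i r) mod int l = (h j r') mod int l" by simp
        hence "int i - 1 = int j - 1" using ij unfolding h_def by simp
        thus False using ij by simp
      qed
    qed
    have inj: "inj_on (h j) A" for j A unfolding h_def inj_on_def using l0 by auto
    have "card (X \<inter> {s * int l..M}) = (\<Sum>j\<in>{1..l}. card (h j ` {s..a j}))"
      unfolding Xwin by (rule card_UN_disjoint) (use disj in auto)
    also have "\<dots> = (\<Sum>j\<in>{1..l}. nat (a j - s + 1))"
      by (rule sum.cong) (auto simp: card_image[OF inj])
    finally have "int (card (X \<inter> {s * int l..M})) = (\<Sum>j\<in>{1..l}. int (nat (a j - s + 1)))"
      by simp
    also have "\<dots> = (\<Sum>j\<in>{1..l}. a j - s + 1)"
    proof (rule sum.cong)
      fix j assume "j \<in> {1..l}"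
      hence "s \<le> a j" by (rule sle)
      thus "int (nat (a j - s + 1)) = a j - s + 1" by simp
    qed simp
    also have "\<dots> = int l * (1 - s)"
      using assms(4) by (simp add: sum.distrib sum_subtractf right_diff_distrib)
    finally show ?thesis .
  qed
  have gM: "int (g M) = M + 1 - int l"
  proof -
    have "s * int l \<le> a j0 * int l" using sle[OF j0(1)] by (intro mult_right_mono) simp_all
    moreover have "int j0 \<ge> 1" using j0 by simp
    ultimately have sM: "s * int l \<le> M" using j0 unfolding f_def by linarith
    have eq: "{y. y \<notin> X \<and> y < M} = {s * int l..<M} - (X \<inter> {s * int l..M} - {M})"
      using below by (auto simp: not_less[symmetric])
    have "card {y. y \<notin> X \<and> y < M} = card {s * int l..<M} - card (X \<inter> {s * int l..M} - {M})"
      unfolding eq by (rule card_Diff_subset) auto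
    moreover have "card (X \<inter> {s * int l..M} - {M}) = card (X \<inter> {s * int l..M}) - 1"
      using MX sM by simp
    moreover have "card (X \<inter> {s * int l..M} - {M}) \<le> card {s * int l..<M}"
      by (rule card_mono) auto
    moreover have "card (X \<inter> {s * int l..M}) \<ge> 1"
    proof -
      have "M \<in> X \<inter> {s * int l..M}" using MX sM by auto
      hence "0 < card (X \<inter> {s * int l..M})" by (subst card_gt_0_iff) auto
      thus ?thesis by simp
    qed
    ultimately show ?thesis using cardwin sM unfolding g_def
      by (simp add: of_nat_diff algebra_simps)
  qed
  define S where "S = {x \<in> X. 0 < g x}"
  have Sfin: "finite S"
  proof (rule finite_subset[of _ "{s * int l..M}"])
    show "S \<subseteq> {s * int l..M}"
    proof
      fix x assume "x \<in> S"
      hence xX: "x \<in> X" and gp: "0 < g x" unfolding S_def by auto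
      have "x \<ge> s * int l"
      proof (rule ccontr)
        assume "\<not> x \<ge> s * int l"
        hence "{y. y \<notin> X \<and> y < x} = {}" using below by force
        hence "g x = 0" unfolding g_def by (simp only: card.empty)
        thus False using gp by simp
      qed
      thus "x \<in> {s * int l..M}" using Xle xX by auto
    qed
  qed simp
  have gdef: "gap_count l a = g" unfolding g_def gap_count_def X_def by (rule ext) simp
  define ys where "ys = sorted_list_of_multiset (image_mset g (mset_set S))"
  have lamy: "lam = rev ys" using assms(5) unfolding ys_def pi_ell_def gdef S_def X_def by simp
  have setys: "set ys = g ` S" unfolding ys_def using Sfin by simp
  have kg: "k = g M"
  proof (cases "ys = []")
    case True
    hence "S = {}" using setys by simp
    hence "g M = 0" using MX unfolding S_def by auto
    thus ?thesis using assms(3) True lamy unfolding largest_part_def by simp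
  next
    case False
    have "k = last ys" using assms(3) False lamy unfolding largest_part_def
      by (simp add: hd_rev)
    moreover have "last ys \<in> g ` S" using False setys last_in_set by metis
    hence "last ys \<le> g M" using gmono Xle unfolding S_def by auto
    moreover have "g M \<le> last ys"
    proof (cases "g M = 0")
      case False
      hence "g M \<in> set ys" using setys MX unfolding S_def by auto
      moreover have "sorted ys" unfolding ys_def by simp
      ultimately show ?thesis using sorted_le_last by blast
    qed simp
    ultimately show ?thesis by simp
  qed
  have kM: "int k = (a j0 - 1) * int l + int j0"
    using kg gM j0 unfolding f_def by (simp add: algebra_simps)
  have j0b: "1 \<le> j0" "j0 \<le> l" using j0 by auto
  have modj: "mod1 k l = j0"
  proof -
    have "int (k mod l) = int j0 mod int l" using kM by (simp add: zmod_int)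
    show ?thesis
    proof (cases "j0 = l")
      case True
      hence "int (k mod l) = 0" using \<open>int (k mod l) = int j0 mod int l\<close> by simp
      thus ?thesis using True unfolding mod1_def by simp
    next
      case False
      hence "int j0 mod int l = int j0" using j0b by simp
      hence "k mod l = j0" using \<open>int (k mod l) = int j0 mod int l\<close> by simp
      thus ?thesis using j0b unfolding mod1_def by simp
    qed
  qed
  have "real k / real l = of_int (a j0 - 1) + real j0 / real l"
  proof -
    have "real k = of_int (int k)" by simp
    also have "\<dots> = of_int (a j0 - 1) * real l + real j0" using kM by simp
    finally show ?thesis using l0 by (simp add: field_simps)
  qed
  moreover have "\<lceil>real j0 / real l\<rceil> = 1"
    using j0b l0 by (simp add: ceiling_eq_iff field_simps)
  ultimately have "\<lceil>real k / real l\<rceil> = a j0"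
    using ceiling_add_of_int[of "real j0 / real l" "a j0 - 1"] by (simp only: add.commute)
  thus ?thesis using modj by simp
qed

end
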